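(* For any $x,y\in\mathbb{R}^n$, $$\big\langle x-y,\ \mathbb{E}_{\mathbb{S}}[(a_{i^*}^Ty-b_{i^*})^+a_{i^*}]\big\rangle=\langle x-y,\nabla f(y)\rangle\le f(x)-f(y)\le\frac{\mu_2}{2}d(x,P)^2-\frac{\mu_1}{2}d(y,P)^2,$$ where in the expectation $i^*$ is selected at the point $y$.
   Context: Let $A\in\mathbb{R}^{m\times n}$ have rows $a_1^T,\dots,a_m^T$ with $\|a_i\|_2=1$, and $b\in\mathbb{R}^m$; assume $Ax\le b$ is consistent and let $P=\{x:Ax\le b\}$, $\mathcal{P}(x)$ the Euclidean projection onto $P$, $d(x,P)=\|x-\mathcal{P}(x)\|$, $t^+=\max\{t,0\}$. Fix an integer $1\le\beta\le m$. Sampling distribution $\mathbb{S}$ at a point $u$: $\tau\subseteq\{1,\dots,m\}$ with $|\tau|=\beta$ uniformly at random, and $i^*\in\tau$ maximizing $(a_i^Tu-b_i)^+$ over $\tau$; $\mathbb{E}_{\mathbb{S}}$ is expectation over $\tau$. $f(u)=\mathbb{E}_{\mathbb{S}}[\frac12|(a_{i^*}^Tu-b_{i^*})^+|^2]$ and $\nabla f(u):=\mathbb{E}_{\mathbb{S}}[(a_{i^*}^Tu-b_{i^*})^+a_{i^*}]$ (with $i^*$ selected at $u$). $L>0$ is a Hoffman constant ($d(u,P)^2\le L^2\|(Au-b)^+\|^2$ for all $u$); $\mu_1=\frac1{mL^2}$, $\mu_2=\min\{1,\frac{\beta}{m}\lambda_{\max}(A^TA)\}$. *)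

theory Defs
  imports "HOL-Analysis.Analysis"
begin

text \<open>Rows of the matrix A are indexed by the finite type 'm (so m = CARD('m)),
  columns by 'n (so x lives in R^n = real^'n).\<close>

definition res :: "real^'n^'m \<Rightarrow> real^'m \<Rightarrow> real^'n \<Rightarrow> 'm \<Rightarrow> real" where
  "res A b u i = max (A $ i \<bullet> u - b $ i) 0"

definition pos_part_vec :: "real^'m \<Rightarrow> real^'m" where
  "pos_part_vec v = (\<chi> i. max (v $ i) 0)"

definition polyhedron :: "real^'n^'m \<Rightarrow> real^'m \<Rightarrow> (real^'n) set" where
  "polyhedron A b = {x. \<forall>i. A $ i \<bullet> x \<le> b $ i}"

definition samples :: "nat \<Rightarrow> 'm::finite set set" where
  "samples \<beta> = {\<tau>. card \<tau> = \<beta>}"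

definition Exp :: "nat \<Rightarrow> ('m::finite set \<Rightarrow> 'v::real_vector) \<Rightarrow> 'v" where
  "Exp \<beta> g = (1 / real (card (samples \<beta> :: 'm set set))) *\<^sub>R (\<Sum>\<tau>\<in>samples \<beta>. g \<tau>)"

definition is_sel :: "real^'n^'m \<Rightarrow> real^'m \<Rightarrow> nat \<Rightarrow> real^'n \<Rightarrow> ('m::finite set \<Rightarrow> 'm) \<Rightarrow> bool" where
  "is_sel A b \<beta> u sel \<longleftrightarrow>
     (\<forall>\<tau>\<in>samples \<beta>. sel \<tau> \<in> \<tau> \<and> (\<forall>j\<in>\<tau>. res A b u j \<le> res A b u (sel \<tau>)))"

text \<open>f(u) = E[1/2 ((a_{i*}^T u - b_{i*})^+)^2], i* selected at u; the value does not
  depend on tie-breaking, so it is the maximum residual over tau.\<close>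
definition fobj :: "real^'n^'m \<Rightarrow> real^'m \<Rightarrow> nat \<Rightarrow> real^'n \<Rightarrow> real" where
  "fobj A b \<beta> u = Exp \<beta> (\<lambda>\<tau>::'m::finite set. (Max (res A b u ` \<tau>))\<^sup>2 / 2)"

definition grad :: "real^'n^'m \<Rightarrow> real^'m \<Rightarrow> nat \<Rightarrow> real^'n \<Rightarrow> ('m::finite set \<Rightarrow> 'm) \<Rightarrow> real^'n" where
  "grad A b \<beta> u sel = Exp \<beta> (\<lambda>\<tau>. res A b u (sel \<tau>) *\<^sub>R (A $ sel \<tau>))"

definition lambda_max :: "real^'n^'n \<Rightarrow> real" where
  "lambda_max M = Max {c. \<exists>v. v \<noteq> 0 \<and> M *v v = c *\<^sub>R v}"

end

theory Submission imports Defs begin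

lemma count_contain:
  fixes i :: "'m::finite"
  assumes "1 \<le> \<beta>"
  shows "card {\<tau>::'m set. card \<tau> = \<beta> \<and> i \<in> \<tau>} = (CARD('m) - 1) choose (\<beta> - 1)"
proof -
  have eq: "{\<tau>::'m set. card \<tau> = \<beta> \<and> i \<in> \<tau>} = insert i ` {\<sigma>. \<sigma> \<subseteq> -{i} \<and> card \<sigma> = \<beta> - 1}"
  proof (rule set_eqI, rule iffI)
    fix \<tau> assume "\<tau> \<in> {\<tau>::'m set. card \<tau> = \<beta> \<and> i \<in> \<tau>}"
    then have h: "card \<tau> = \<beta>" "i \<in> \<tau>" by auto
    then have "\<tau> = insert i (\<tau> - {i})" "card (\<tau> - {i}) = \<beta> - 1" by auto
    then show "\<tau> \<in> insert i ` {\<sigma>. \<sigma> \<subseteq> -{i} \<and> card \<sigma> = \<beta> - 1}" by blast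
  next
    fix \<tau> assume "\<tau> \<in> insert i ` {\<sigma>. \<sigma> \<subseteq> -{i} \<and> card \<sigma> = \<beta> - 1}"
    then obtain \<sigma> where "\<sigma> \<subseteq> -{i}" "card \<sigma> = \<beta> - 1" "\<tau> = insert i \<sigma>" by auto
    then show "\<tau> \<in> {\<tau>::'m set. card \<tau> = \<beta> \<and> i \<in> \<tau>}" using assms by auto
  qed
  have inj: "inj_on (insert i) {\<sigma>. \<sigma> \<subseteq> -{i} \<and> card \<sigma> = \<beta> - 1}"
    by (rule inj_onI) (metis Diff_insert_absorb ComplD insertCI mem_Collect_eq subsetD)
  have "card (-{i::'m}) = CARD('m) - 1"
    by (simp add: Compl_eq_Diff_UNIV card_Diff_singleton)
  then show ?thesis unfolding eq card_image[OF inj]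
    using n_subsets[of "-{i}" "\<beta> - 1"] by simp
qed

lemma card_samples: "card (samples \<beta> :: 'm::finite set set) = CARD('m) choose \<beta>"
  using n_subsets[of "UNIV::'m set" \<beta>] unfolding samples_def by simp

lemma double_count:
  fixes g :: "'m::finite \<Rightarrow> real"
  assumes "1 \<le> \<beta>"
  shows "real CARD('m) * (\<Sum>\<tau>\<in>samples \<beta>. \<Sum>i\<in>\<tau>. g i)
       = real \<beta> * real (card (samples \<beta> :: 'm set set)) * (\<Sum>i\<in>UNIV. g i)"
proof -
  have fin: "finite (samples \<beta> :: 'm set set)" by simp
  have "(\<Sum>\<tau>\<in>samples \<beta>. \<Sum>i\<in>\<tau>. g i) = (\<Sum>\<tau>\<in>samples \<beta>. \<Sum>i\<in>UNIV. if i \<in> \<tau> then g i else 0)"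
    by (rule sum.cong) (auto simp: sum.If_cases)
  also have "\<dots> = (\<Sum>i\<in>UNIV. \<Sum>\<tau>\<in>samples \<beta>. if i \<in> \<tau> then g i else 0)"
    by (rule sum.swap)
  also have "\<dots> = (\<Sum>i\<in>UNIV. g i * real ((CARD('m) - 1) choose (\<beta> - 1)))"
  proof (rule sum.cong)
    fix i :: 'm
    have "(\<Sum>\<tau>\<in>samples \<beta>. if i \<in> \<tau> then g i else 0) = g i * real (card {\<tau>\<in>samples \<beta>. i \<in> \<tau>})"
      using fin by (simp add: sum.If_cases Int_def)
    also have "{\<tau>\<in>samples \<beta>. i \<in> \<tau>} = {\<tau>::'m set. card \<tau> = \<beta> \<and> i \<in> \<tau>}"
      unfolding samples_def by auto
    finally show "(\<Sum>\<tau>\<in>samples \<beta>. if i \<in> \<tau> then g i else 0) = g i * real ((CARD('m) - 1) choose (\<beta> - 1))"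
      using count_contain[OF assms, of i] by simp
  qed simp
  finally have "(\<Sum>\<tau>\<in>samples \<beta>. \<Sum>i\<in>\<tau>. g i) = (\<Sum>i\<in>UNIV. g i) * real ((CARD('m) - 1) choose (\<beta> - 1))"
    by (simp add: sum_distrib_right)
  moreover have "\<beta> * (CARD('m) choose \<beta>) = CARD('m) * ((CARD('m) - 1) choose (\<beta> - 1))"
    using times_binomial_minus1_eq[of \<beta> "CARD('m)"] assms by simp
  then have "real \<beta> * real (CARD('m) choose \<beta>) = real CARD('m) * real ((CARD('m) - 1) choose (\<beta> - 1))"
    by (metis of_nat_mult)
  ultimately show ?thesis unfolding card_samples by (metis mult.commute mult.left_commute)
qed

lemma AtA_inner:
  fixes A :: "real^'n^'m"
  shows "((transpose A ** A) *v u) \<bullet> w = (A *v u) \<bullet> (A *v w)"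
  by (simp add: matrix_vector_mul_assoc[symmetric] dot_lmul_matrix)

lemma eig_bound:
  fixes A :: "real^'n^'m" and v :: "real^'n"
  shows "(norm (A *v v))\<^sup>2 \<le> lambda_max (transpose A ** A) * (norm v)\<^sup>2"
proof -
  define B where "B = transpose A ** A"
  define h where "h = (\<lambda>v::real^'n. (norm (A *v v))\<^sup>2)"
  have Bi: "(B *v u) \<bullet> w = (A *v u) \<bullet> (A *v w)" for u w unfolding B_def by (rule AtA_inner)
  obtain u :: "real^'n" where u: "norm u = 1" using vector_choose_size[of 1] by auto
  have "continuous_on (sphere 0 1) h" unfolding h_def
    by (intro continuous_intros)
  moreover have "sphere (0::real^'n) 1 \<noteq> {}" using u by auto
  ultimately obtain v0 where v0: "v0 \<in> sphere 0 1" and mx: "\<forall>y\<in>sphere 0 1. h y \<le> h v0"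
    using continuous_attains_sup[OF compact_sphere] by blast
  define M where "M = h v0"
  have nv0: "norm v0 = 1" using v0 by simp
  have Mb: "h w \<le> M * (norm w)\<^sup>2" for w
  proof (cases "w = 0")
    case True then show ?thesis by (simp add: h_def)
  next
    case False
    then have "norm w > 0" by simp
    have "(inverse (norm w)) *\<^sub>R w \<in> sphere 0 1" using False by simp
    then have "h ((inverse (norm w)) *\<^sub>R w) \<le> M" using mx M_def by blast
    moreover have "h ((inverse (norm w)) *\<^sub>R w) = h w / (norm w)\<^sup>2"
      by (simp add: h_def matrix_vector_mult_scaleR power_divide power_mult_distrib divide_inverse power_inverse)
    ultimately show ?thesis using \<open>norm w > 0\<close> by (simp add: divide_le_eq mult.commute)
  qed
  have Mnn: "0 \<le> M" unfolding M_def h_def by simp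
  define z where "z = B *v v0 - M *\<^sub>R v0"
  have eig: "B *v v0 = M *\<^sub>R v0"
  proof (rule ccontr)
    assume "B *v v0 \<noteq> M *\<^sub>R v0"
    then have zp: "z \<bullet> z > 0" unfolding z_def by simp
    define Q where "Q = M * (norm z)\<^sup>2 - h z"
    have Q0: "Q \<ge> 0" using Mb[of z] unfolding Q_def by simp
    have key: "0 \<le> - 2 * t * (z \<bullet> z) + t\<^sup>2 * Q" for t
    proof -
      have "h (v0 + t *\<^sub>R z) \<le> M * (norm (v0 + t *\<^sub>R z))\<^sup>2" by (rule Mb)
      moreover have "h (v0 + t *\<^sub>R z) = h v0 + 2 * t * ((A *v v0) \<bullet> (A *v z)) + t\<^sup>2 * h z"
        unfolding h_def power2_norm_eq_inner
        by (simp add: matrix_vector_right_distrib matrix_vector_mult_scaleR inner_add_left inner_add_right inner_commute power2_eq_square algebra_simps)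
      moreover have "(norm (v0 + t *\<^sub>R z))\<^sup>2 = 1 + 2 * t * (v0 \<bullet> z) + t\<^sup>2 * (norm z)\<^sup>2"
        using nv0 unfolding power2_norm_eq_inner
        by (simp add: norm_eq_1[symmetric] inner_add_left inner_add_right inner_commute power2_eq_square algebra_simps)
      moreover have "(A *v v0) \<bullet> (A *v z) = z \<bullet> z + M * (v0 \<bullet> z)"
        using Bi[of v0 z] unfolding z_def by (simp add: inner_diff_left algebra_simps inner_commute)
      ultimately show ?thesis unfolding Q_def M_def by (simp add: algebra_simps power2_eq_square)
    qed
    define t where "t = (z \<bullet> z) / (Q + 1)"
    have tp: "t > 0" unfolding t_def using zp Q0 by simp
    have "t * Q \<le> z \<bullet> z" unfolding t_def using zp Q0
      by (simp add: field_simps)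
    then have "t\<^sup>2 * Q \<le> t * (z \<bullet> z)" using tp
      by (metis mult.assoc mult_left_mono less_imp_le power2_eq_square)
    moreover have "t * (z \<bullet> z) > 0" using tp zp by simp
    ultimately show False using key[of t] by linarith
  qed
  define S where "S = {c. \<exists>v. v \<noteq> 0 \<and> (transpose A ** A) *v v = c *\<^sub>R v}"
  have MS: "M \<in> S" unfolding S_def B_def[symmetric] using eig nv0 by (auto intro!: exI[of _ v0])
  define e where "e = (\<lambda>c. SOME v. v \<noteq> 0 \<and> B *v v = c *\<^sub>R v)"
  have e: "e c \<noteq> 0 \<and> B *v (e c) = c *\<^sub>R e c" if "c \<in> S" for c
    using that unfolding S_def B_def[symmetric] e_def by (metis (mono_tags, lifting) someI_ex mem_Collect_eq)
  have inj: "inj_on e S"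
  proof (rule inj_onI)
    fix c c' assume "c \<in> S" "c' \<in> S" "e c = e c'"
    then have "c *\<^sub>R e c = c' *\<^sub>R e c" "e c \<noteq> 0" using e by metis+
    then show "c = c'" by (simp add: scaleR_cancel_right)
  qed
  have orth: "e c \<bullet> e c' = 0" if "c \<in> S" "c' \<in> S" "c \<noteq> c'" for c c'
  proof -
    have "c * (e c \<bullet> e c') = (B *v e c) \<bullet> e c'" using e[OF that(1)] by simp
    also have "\<dots> = (B *v e c') \<bullet> e c" using Bi[of "e c" "e c'"] Bi[of "e c'" "e c"] by (simp add: inner_commute)
    also have "\<dots> = c' * (e c \<bullet> e c')" using e[OF that(2)] by (simp add: inner_commute)
    finally show ?thesis using that(3) by simp
  qed
  have "independent (e ` S)"
  proof (rule pairwise_orthogonal_independent)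
    show "pairwise orthogonal (e ` S)"
      unfolding pairwise_def orthogonal_def using orth by auto
    show "0 \<notin> e ` S"
    proof
      assume "0 \<in> e ` S"
      then obtain c where "c \<in> S" "e c = 0" by auto
      then show False using e by auto
    qed
  qed
  then have "finite (e ` S)" by (rule finiteI_independent)
  then have fS: "finite S" using inj finite_imageD by blast
  have "M \<le> lambda_max (transpose A ** A)" unfolding lambda_max_def S_def[symmetric]
    using fS MS by simp
  then have "M * (norm v)\<^sup>2 \<le> lambda_max (transpose A ** A) * (norm v)\<^sup>2"
    by (simp add: mult_right_mono)
  then show ?thesis using Mb[of v] unfolding h_def by simp
qed


lemma Exp_real: "Exp \<beta> (g :: 'm::finite set \<Rightarrow> real) = (\<Sum>\<tau>\<in>samples \<beta>. g \<tau>) / real (card (samples \<beta> :: 'm set set))"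
  unfolding Exp_def by simp

lemma inner_Exp: "z \<bullet> Exp \<beta> (g :: 'm::finite set \<Rightarrow> 'a::real_inner) = Exp \<beta> (\<lambda>\<tau>. z \<bullet> g \<tau>)"
  unfolding Exp_def by (simp add: inner_sum_right)

lemma scalar_ineq:
  fixes s t :: real
  shows "max t 0 * (s - t) \<le> (max s 0)\<^sup>2 / 2 - (max t 0)\<^sup>2 / 2"
proof (cases "t \<le> 0")
  case True then show ?thesis by simp
next
  case False
  show ?thesis
  proof (cases "s \<le> 0")
    case True
    then have "t * s \<le> 0" using False by (simp add: mult_nonneg_nonpos)
    then show ?thesis using False True by (simp add: power2_eq_square algebra_simps)
  next
    case False2: False
    have "0 \<le> (s - t)\<^sup>2" by simp
    then show ?thesis using False False2 by (simp add: power2_eq_square algebra_simps)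
  qed
qed

lemma pos_norm:
  fixes A :: "real^'n^'m" 
  shows "(norm (pos_part_vec (A *v u - b)))\<^sup>2 = (\<Sum>i\<in>UNIV. (res A b u i)\<^sup>2)"
  unfolding power2_norm_eq_inner pos_part_vec_def res_def
  by (simp add: inner_vec_def matrix_vector_mult_def power2_eq_square mult.commute)

lemma normAv:
  fixes A :: "real^'n^'m" 
  shows "(norm (A *v v))\<^sup>2 = (\<Sum>i\<in>UNIV. (A $ i \<bullet> v)\<^sup>2)"
  unfolding power2_norm_eq_inner
  by (simp add: inner_vec_def matrix_vector_mult_def power2_eq_square mult.commute)


theorem lemma7:
  fixes A :: "real^'n^'m" and b :: "real^'m" and \<beta> :: nat and L :: real
    and x y :: "real^'n" and sel :: "'m set \<Rightarrow> 'm"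
  assumes rows: "\<forall>i. norm (A $ i) = 1"
    and consistent: "polyhedron A b \<noteq> {}"
    and beta: "1 \<le> \<beta>" "\<beta> \<le> CARD('m)"
    and Lpos: "L > 0"
    and hoffman: "\<forall>u. (infdist u (polyhedron A b))\<^sup>2 \<le> L\<^sup>2 * (norm (pos_part_vec (A *v u - b)))\<^sup>2"
    and sel: "is_sel A b \<beta> y sel"
  shows "(x - y) \<bullet> Exp \<beta> (\<lambda>\<tau>. max (A $ sel \<tau> \<bullet> y - b $ sel \<tau>) 0 *\<^sub>R (A $ sel \<tau>))
           = (x - y) \<bullet> grad A b \<beta> y sel
       \<and> (x - y) \<bullet> grad A b \<beta> y sel \<le> fobj A b \<beta> x - fobj A b \<beta> y
       \<and> fobj A b \<beta> x - fobj A b \<beta> y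
           \<le> (min 1 (real \<beta> / real CARD('m) * lambda_max (transpose A ** A))) / 2
                * (infdist x (polyhedron A b))\<^sup>2
             - (1 / (real CARD('m) * L\<^sup>2)) / 2 * (infdist y (polyhedron A b))\<^sup>2"
proof -
  let ?S = "samples \<beta> :: 'm set set"
  let ?P = "polyhedron A b"
  define N where "N = real (card ?S)"
  define m where "m = real CARD('m)"
  define r where "r = res A b"
  define R where "R = (\<lambda>u. \<Sum>i\<in>UNIV. (r u i)\<^sup>2)"
  have Npos: "N > 0" unfolding N_def card_samples using beta by simp
  have mpos: "m > 0" unfolding m_def by simp
  have rnn: "0 \<le> r u i" for u i unfolding r_def res_def by simp
  have tau: "finite \<tau>" "\<tau> \<noteq> {}" "card \<tau> = \<beta>" if "\<tau> \<in> ?S" for \<tau>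
    using that beta unfolding samples_def by auto
  have fobj_eq: "fobj A b \<beta> u = (\<Sum>\<tau>\<in>?S. (Max (r u ` \<tau>))\<^sup>2 / 2) / N" for u
    unfolding fobj_def Exp_real N_def r_def by simp
  have dc: "m * (\<Sum>\<tau>\<in>?S. \<Sum>i\<in>\<tau>. (r u i)\<^sup>2) = real \<beta> * N * R u" for u
    unfolding m_def N_def R_def by (rule double_count[OF beta(1)])
  have Mx_in: "Max (r u ` \<tau>) \<in> r u ` \<tau>" if "\<tau> \<in> ?S" for u \<tau>
    using tau[OF that] by (intro Max_in) auto
  have Mx_ge: "r u i \<le> Max (r u ` \<tau>)" if "\<tau> \<in> ?S" "i \<in> \<tau>" for u \<tau> i
    using tau[OF that(1)] that(2) by (intro Max_ge) auto
  have F2: "(Max (r u ` \<tau>))\<^sup>2 \<le> (\<Sum>i\<in>\<tau>. (r u i)\<^sup>2)" if t0: "\<tau> \<in> ?S" for u \<tau>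
  proof -
    obtain j where j: "j \<in> \<tau>" "Max (r u ` \<tau>) = r u j" using Mx_in[OF t0] by auto
    show ?thesis unfolding j(2) using tau[OF t0] j(1)
      by (intro member_le_sum) auto
  qed
  have F3: "(\<Sum>i\<in>\<tau>. (r u i)\<^sup>2) \<le> real \<beta> * (Max (r u ` \<tau>))\<^sup>2" if "\<tau> \<in> ?S" for u \<tau>
  proof -
    have "(\<Sum>i\<in>\<tau>. (r u i)\<^sup>2) \<le> of_nat (card \<tau>) * (Max (r u ` \<tau>))\<^sup>2"
      by (rule sum_bounded_above) (use Mx_ge[OF that] rnn in \<open>auto intro: power_mono\<close>)
    then show ?thesis using tau[OF that] by simp
  qed
  have up1: "fobj A b \<beta> u \<le> real \<beta> / m * R u / 2" for u
  proof -
    have "(\<Sum>\<tau>\<in>?S. (Max (r u ` \<tau>))\<^sup>2 / 2) \<le> (\<Sum>\<tau>\<in>?S. (\<Sum>i\<in>\<tau>. (r u i)\<^sup>2) / 2)"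
      by (intro sum_mono) (use F2 in auto)
    also have "\<dots> = (\<Sum>\<tau>\<in>?S. \<Sum>i\<in>\<tau>. (r u i)\<^sup>2) / 2" by (simp add: sum_divide_distrib)
    also have "\<dots> = real \<beta> * N * R u / m / 2" using dc[of u] mpos by (simp add: field_simps)
    finally show ?thesis unfolding fobj_eq using Npos by (simp add: divide_le_eq field_simps)
  qed
  have low: "R u / m / 2 \<le> fobj A b \<beta> u" for u
  proof -
    have "(\<Sum>\<tau>\<in>?S. (\<Sum>i\<in>\<tau>. (r u i)\<^sup>2) / real \<beta> / 2) \<le> (\<Sum>\<tau>\<in>?S. (Max (r u ` \<tau>))\<^sup>2 / 2)"
      by (intro sum_mono) (use F3 beta in \<open>auto simp: divide_le_eq mult.commute\<close>)
    moreover have "(\<Sum>\<tau>\<in>?S. (\<Sum>i\<in>\<tau>. (r u i)\<^sup>2) / real \<beta> / 2) = (\<Sum>\<tau>\<in>?S. \<Sum>i\<in>\<tau>. (r u i)\<^sup>2) / real \<beta> / 2"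
      by (simp add: sum_divide_distrib)
    moreover have "\<dots> = N * R u / m / 2" using dc[of u] mpos beta by (simp add: field_simps)
    ultimately show ?thesis unfolding fobj_eq using Npos by (simp add: le_divide_eq field_simps)
  qed
  have hy: "(infdist y ?P)\<^sup>2 \<le> L\<^sup>2 * R y"
    using hoffman pos_norm unfolding R_def r_def by metis
  have lowy: "(1 / (m * L\<^sup>2)) / 2 * (infdist y ?P)\<^sup>2 \<le> fobj A b \<beta> y"
  proof -
    have "(1 / (m * L\<^sup>2)) / 2 * (infdist y ?P)\<^sup>2 \<le> (1 / (m * L\<^sup>2)) / 2 * (L\<^sup>2 * R y)"
      using hy mpos Lpos by (intro mult_left_mono) auto
    also have "\<dots> = R y / m / 2" using Lpos by (simp add: field_simps)
    finally show ?thesis using low[of y] by linarith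
  qed
  have closedP: "closed ?P" unfolding polyhedron_def
    by (intro closed_Collect_all closed_Collect_le continuous_intros)
  obtain p where p: "p \<in> ?P" "infdist x ?P = dist x p"
    using infdist_attains_inf[OF closedP consistent] by blast
  define d where "d = infdist x ?P"
  have dnn: "0 \<le> d" unfolding d_def by (rule infdist_nonneg)
  have rx: "r x i \<le> \<bar>A $ i \<bullet> (x - p)\<bar>" for i
    using p(1) unfolding r_def res_def polyhedron_def by (auto simp: inner_diff_right) (smt (verit, best))
  have rxd: "r x i \<le> d" for i
  proof -
    have "\<bar>A $ i \<bullet> (x - p)\<bar> \<le> norm (A $ i) * norm (x - p)" by (rule Cauchy_Schwarz_ineq2)
    then show ?thesis using rx[of i] rows p(2) unfolding d_def by (simp add: dist_norm)
  qed
  have up2: "fobj A b \<beta> x \<le> d\<^sup>2 / 2"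
  proof -
    have "(\<Sum>\<tau>\<in>?S. (Max (r x ` \<tau>))\<^sup>2 / 2) \<le> (\<Sum>\<tau>\<in>?S. d\<^sup>2 / 2)"
    proof (intro sum_mono)
      fix \<tau> assume t: "\<tau> \<in> ?S"
      obtain j where j: "Max (r x ` \<tau>) = r x j" using Mx_in[OF t] by auto
      show "(Max (r x ` \<tau>))\<^sup>2 / 2 \<le> d\<^sup>2 / 2" unfolding j using rxd[of j] rnn[of x j]
        by (simp add: power_mono)
    qed
    then show ?thesis unfolding fobj_eq using Npos by (simp add: N_def divide_le_eq mult.commute)
  qed
  have Rx: "R x \<le> lambda_max (transpose A ** A) * d\<^sup>2"
  proof -
    have "R x \<le> (\<Sum>i\<in>UNIV. (A $ i \<bullet> (x - p))\<^sup>2)" unfolding R_def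
      by (intro sum_mono) (metis rx rnn power_mono power2_abs)
    also have "\<dots> = (norm (A *v (x - p)))\<^sup>2" by (simp add: normAv)
    also have "\<dots> \<le> lambda_max (transpose A ** A) * (norm (x - p))\<^sup>2" by (rule eig_bound)
    finally show ?thesis using p(2) unfolding d_def by (simp add: dist_norm)
  qed
  have up3: "fobj A b \<beta> x \<le> (real \<beta> / m * lambda_max (transpose A ** A)) / 2 * d\<^sup>2"
  proof -
    have "real \<beta> / m * R x / 2 \<le> real \<beta> / m * (lambda_max (transpose A ** A) * d\<^sup>2) / 2"
      using Rx mpos by (intro divide_right_mono mult_left_mono) auto
    then show ?thesis using up1[of x] by (simp add: algebra_simps)
  qed
  have upx: "fobj A b \<beta> x \<le> (min 1 (real \<beta> / m * lambda_max (transpose A ** A))) / 2 * d\<^sup>2"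
    using up2 up3 by (cases "1 \<le> real \<beta> / m * lambda_max (transpose A ** A)") (auto simp: min_def)
  have c1: "(x - y) \<bullet> Exp \<beta> (\<lambda>\<tau>. max (A $ sel \<tau> \<bullet> y - b $ sel \<tau>) 0 *\<^sub>R (A $ sel \<tau>))
           = (x - y) \<bullet> grad A b \<beta> y sel"
    unfolding grad_def res_def ..
  have c2: "(x - y) \<bullet> grad A b \<beta> y sel \<le> fobj A b \<beta> x - fobj A b \<beta> y"
  proof -
    have "(\<Sum>\<tau>\<in>?S. (x - y) \<bullet> (r y (sel \<tau>) *\<^sub>R A $ sel \<tau>))
        \<le> (\<Sum>\<tau>\<in>?S. (Max (r x ` \<tau>))\<^sup>2 / 2 - (Max (r y ` \<tau>))\<^sup>2 / 2)"
    proof (intro sum_mono)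
      fix \<tau> assume t: "\<tau> \<in> ?S"
      let ?s = "sel \<tau>"
      have st: "?s \<in> \<tau>" and smax: "\<forall>j\<in>\<tau>. r y j \<le> r y ?s"
        using sel t unfolding is_sel_def r_def by auto
      have My: "Max (r y ` \<tau>) = r y ?s"
        using tau[OF t] st smax by (intro Max_eqI) auto
      have Mx: "(r x ?s)\<^sup>2 \<le> (Max (r x ` \<tau>))\<^sup>2"
        using Mx_ge[OF t st] rnn by (simp add: power_mono)
      have "(x - y) \<bullet> (r y ?s *\<^sub>R A $ ?s) = max (A $ ?s \<bullet> y - b $ ?s) 0 * ((A $ ?s \<bullet> x - b $ ?s) - (A $ ?s \<bullet> y - b $ ?s))"
        unfolding r_def res_def by (simp add: inner_diff_left inner_commute)
      also have "\<dots> \<le> (max (A $ ?s \<bullet> x - b $ ?s) 0)\<^sup>2 / 2 - (max (A $ ?s \<bullet> y - b $ ?s) 0)\<^sup>2 / 2"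
        by (rule scalar_ineq)
      also have "\<dots> = (r x ?s)\<^sup>2 / 2 - (Max (r y ` \<tau>))\<^sup>2 / 2" unfolding My by (simp add: r_def res_def)
      finally show "(x - y) \<bullet> (r y ?s *\<^sub>R A $ ?s) \<le> (Max (r x ` \<tau>))\<^sup>2 / 2 - (Max (r y ` \<tau>))\<^sup>2 / 2"
        using Mx by linarith
    qed
    moreover have "(\<Sum>\<tau>\<in>?S. (Max (r x ` \<tau>))\<^sup>2 / 2 - (Max (r y ` \<tau>))\<^sup>2 / 2)
       = (\<Sum>\<tau>\<in>?S. (Max (r x ` \<tau>))\<^sup>2 / 2) - (\<Sum>\<tau>\<in>?S. (Max (r y ` \<tau>))\<^sup>2 / 2)"
      by (rule sum_subtractf)
    ultimately have "(\<Sum>\<tau>\<in>?S. (x - y) \<bullet> (r y (sel \<tau>) *\<^sub>R A $ sel \<tau>)) / N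
        \<le> (\<Sum>\<tau>\<in>?S. (Max (r x ` \<tau>))\<^sup>2 / 2) / N - (\<Sum>\<tau>\<in>?S. (Max (r y ` \<tau>))\<^sup>2 / 2) / N"
      using Npos unfolding diff_divide_distrib[symmetric] by (intro divide_right_mono) linarith+
    then show ?thesis unfolding grad_def inner_Exp Exp_real fobj_eq N_def r_def .
  qed
  show ?thesis
    using c1 c2 upx lowy unfolding m_def d_def by linarith
qed

end
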